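(* For every $n\geq 1$: $\widehat{\left(\Sigma_n^0\text{-}\mathrm{LLPO}\right)}\leq_W\mathrm{Det}_{\mathfrak{D}_n}$ and $\left(\Sigma_n^0\text{-}\mathrm{LEM}\right)\leq_W\mathrm{Win}_{\mathfrak{D}_n}$.
   Context: $f\leq_W g$ (Weihrauch reducibility between partial multivalued maps on represented spaces) iff there are computable partial $K,H:\subseteq\mathbb{N}^\mathbb{N}\to\mathbb{N}^\mathbb{N}$ such that for every realizer $G$ of $g$, $p\mapsto K(\langle p,G(H(p))\rangle)$ is a realizer of $f$. $\widehat{f}(x_0,x_1,\ldots)=(f(x_0),f(x_1),\ldots)$. For $p\in\{0,1\}^\mathbb{N}$ let $\varphi_n(p)$ be the statement $\forall k_1\exists k_2\ldots\natural k_n\ p(\langle k_1,\ldots,k_n\rangle)=1$ (alternating quantifiers starting with $\forall$; $\natural=\forall$ if $n$ odd, $\exists$ if $n$ even; $\langle\cdot\rangle$ a computable tupling). $\Sigma^0_n\text{-}\mathrm{LEM}:\{0,1\}^\mathbb{N}\to\{0,1\}$ outputs $1$ iff $\varphi_n(p)$ holds. $\Sigma^0_n\text{-}\mathrm{LLPO}$ takes a pair $(p_0,p_1)$ for which $\varphi_n(p_0)$ or $\varphi_n(p_1)$ holds, and outputs any $i\in\{0,1\}$ with $\varphi_n(p_i)$. $\mathfrak{D}_n$ ($n$-th level of the difference hierarchy) consists of the sets $D\subseteq\{0,1\}^\mathbb{N}$ for which there are open $U_0,\ldots,U_{n-1}$ with $x\in D\iff \min\{\beta\mid x\in U_\beta\}\not\equiv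 n \pmod 2$ (where $\min\emptyset=n$); such $D$ is named by names of $U_0,\ldots,U_{n-1}$ (an open set being named by an enumeration of words $w$ with $U=\bigcup w\{0,1\}^\mathbb{N}$). Games: win/lose games with players 1,2, choices $\{0,1\}$, turn function $d:\{0,1\}^*\to\{1,2\}$ (lookup table), winning set for player 1, the rest won by player 2; a strategy is winning if all plays consistent with it are won. $\mathrm{Det}_\Gamma$: input such a game with player-1 winning set given by a $\Gamma$-name; output any strategy profile (function $\{0,1\}^*\to\{0,1\}$) in which one strategy is winning. $\mathrm{Win}_\Gamma$: same input, output the player having a winning strategy. *)

theory Defs
  imports Main "HOL-Library.Nat_Bijection"
begin

type_synonym baire = "nat \<Rightarrow> nat"

text \<open>Programs for (unary, via Cantor pairing) partial recursive functions relative
  to an oracle p in Baire space.\<close>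

datatype prog = Zer | Sc | Fs | Sn | Orc | Cmp prog prog | Pr prog prog
  | Rec prog prog | Mu prog

inductive ev :: "baire \<Rightarrow> prog \<Rightarrow> nat \<Rightarrow> nat \<Rightarrow> bool" for p :: baire where
  ev_zer: "ev p Zer x 0"
| ev_sc: "ev p Sc x (Suc x)"
| ev_fs: "ev p Fs x (fst (prod_decode x))"
| ev_sn: "ev p Sn x (snd (prod_decode x))"
| ev_orc: "ev p Orc x (p x)"
| ev_cmp: "ev p g x y \<Longrightarrow> ev p f y z \<Longrightarrow> ev p (Cmp f g) x z"
| ev_pr: "ev p f x y \<Longrightarrow> ev p g x z \<Longrightarrow> ev p (Pr f g) x (prod_encode (y, z))"
| ev_rec0: "ev p f x y \<Longrightarrow> ev p (Rec f g) (prod_encode (x, 0)) y"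
| ev_recS: "ev p (Rec f g) (prod_encode (x, n)) y \<Longrightarrow>
            ev p g (prod_encode (x, prod_encode (n, y))) z \<Longrightarrow>
            ev p (Rec f g) (prod_encode (x, Suc n)) z"
| ev_mu: "ev p f (prod_encode (x, n)) 0 \<Longrightarrow>
          (\<forall>m<n. \<exists>v. 0 < v \<and> ev p f (prod_encode (x, m)) v) \<Longrightarrow>
          ev p (Mu f) x n"

definition computable :: "(baire \<Rightarrow> baire option) \<Rightarrow> bool" where
  "computable F \<longleftrightarrow> (\<exists>c. \<forall>p q. F p = Some q \<longrightarrow> (\<forall>i. ev p c i (q i)))"

definition baire_pair :: "baire \<Rightarrow> baire \<Rightarrow> baire" where
  "baire_pair p q = (\<lambda>i. if even i then p (i div 2) else q (i div 2))"

text \<open>A representation of X is a partial map from Baire space onto (a subset of) X.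
  A partial multivalued map f is a map into sets; dom f = {x. f x \<noteq> {}}.\<close>
type_synonym 'a rep = "baire \<Rightarrow> 'a option"

definition realizer :: "'a rep \<Rightarrow> 'b rep \<Rightarrow> ('a \<Rightarrow> 'b set) \<Rightarrow> (baire \<Rightarrow> baire option) \<Rightarrow> bool" where
  "realizer dX dY f F \<longleftrightarrow>
     (\<forall>p x. dX p = Some x \<longrightarrow> f x \<noteq> {} \<longrightarrow>
        (\<exists>q y. F p = Some q \<and> dY q = Some y \<and> y \<in> f x))"

definition weihrauch_le ::
  "'a rep \<Rightarrow> 'b rep \<Rightarrow> ('a \<Rightarrow> 'b set) \<Rightarrow> 'c rep \<Rightarrow> 'd rep \<Rightarrow> ('c \<Rightarrow> 'd set) \<Rightarrow> bool" where
  "weihrauch_le dX dY f dZ dW g \<longleftrightarrow>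
     (\<exists>K H. computable K \<and> computable H \<and>
        (\<forall>G. realizer dZ dW g G \<longrightarrow>
           realizer dX dY f (\<lambda>p. Option.bind (H p) (\<lambda>h. Option.bind (G h) (\<lambda>q. K (baire_pair p q))))))"

definition hat :: "('a \<Rightarrow> 'b set) \<Rightarrow> (nat \<Rightarrow> 'a) \<Rightarrow> (nat \<Rightarrow> 'b) set" where
  "hat f xs = {ys. \<forall>i. ys i \<in> f (xs i)}"

type_synonym cantor = "nat \<Rightarrow> bool"

text \<open>{0,1} is modelled by bool (1 = True); {0,1}^N by nat => bool.\<close>
definition rep_bool :: "bool rep" where
  "rep_bool p = (if p 0 \<le> 1 then Some (p 0 = 1) else None)"

definition rep_cantor :: "cantor rep" where
  "rep_cantor p = (if \<forall>i. p i \<le> 1 then Some (\<lambda>i. p i = 1) else None)"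

definition rep_prod :: "'a rep \<Rightarrow> 'b rep \<Rightarrow> ('a \<times> 'b) rep" where
  "rep_prod dX dY r = (case (dX (\<lambda>i. r (2 * i)), dY (\<lambda>i. r (2 * i + 1))) of
      (Some x, Some y) \<Rightarrow> Some (x, y) | _ \<Rightarrow> None)"

definition rep_seq :: "'a rep \<Rightarrow> (nat \<Rightarrow> 'a) rep" where
  "rep_seq dX r = (if \<forall>i. dX (\<lambda>j. r (prod_encode (i, j))) \<noteq> None
      then Some (\<lambda>i. the (dX (\<lambda>j. r (prod_encode (i, j))))) else None)"

fun alt :: "bool \<Rightarrow> nat \<Rightarrow> (nat list \<Rightarrow> bool) \<Rightarrow> nat list \<Rightarrow> bool" where
  "alt b 0 P ks = P ks"
| "alt True (Suc m) P ks = (\<forall>k. alt False m P (ks @ [k]))"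
| "alt False (Suc m) P ks = (\<exists>k. alt True m P (ks @ [k]))"

text \<open>phi n p: forall k1 exists k2 ... p(<k1,...,kn>) = 1, with list_encode as tupling.\<close>
definition phi :: "nat \<Rightarrow> cantor \<Rightarrow> bool" where
  "phi n p = alt True n (\<lambda>ks. p (list_encode ks)) []"

definition sigma_LEM :: "nat \<Rightarrow> cantor \<Rightarrow> bool set" where
  "sigma_LEM n p = {phi n p}"

definition sigma_LLPO :: "nat \<Rightarrow> cantor \<times> cantor \<Rightarrow> bool set" where
  "sigma_LLPO n pp = {i. phi n (if i then snd pp else fst pp)}"

text \<open>Bijective coding of binary words by natural numbers.\<close>
fun wcode :: "bool list \<Rightarrow> nat" where
  "wcode [] = 0"
| "wcode (b # w) = 2 * wcode w + 1 + (if b then 1 else 0)"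

definition prefix_of :: "cantor \<Rightarrow> nat \<Rightarrow> bool list" where
  "prefix_of x k = map x [0..<k]"

text \<open>Open set named by an enumeration of words: value 0 means no word,
  value Suc (wcode w) enumerates w; U = union of the cylinders w{0,1}^N.\<close>
definition open_of :: "baire \<Rightarrow> cantor set" where
  "open_of r = {x. \<exists>i w. r i = Suc (wcode w) \<and> prefix_of x (length w) = w}"

definition dset :: "nat \<Rightarrow> (nat \<Rightarrow> cantor set) \<Rightarrow> cantor set" where
  "dset n U = {x. (if \<exists>\<beta><n. x \<in> U \<beta> then (LEAST \<beta>. x \<in> U \<beta>) else n) mod 2 \<noteq> n mod 2}"

definition rep_D :: "nat \<Rightarrow> cantor set rep" where
  "rep_D n r = Some (dset n (\<lambda>\<beta>. open_of (\<lambda>j. r (prod_encode (\<beta>, j)))))"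

datatype player = P1 | P2

text \<open>A game: turn function (lookup table) and winning set of player 1.\<close>
type_synonym game = "(bool list \<Rightarrow> player) \<times> cantor set"

definition rep_player :: "player rep" where
  "rep_player p = (if p 0 = 1 then Some P1 else if p 0 = 2 then Some P2 else None)"

definition rep_turn :: "(bool list \<Rightarrow> player) rep" where
  "rep_turn p = (if \<forall>w. p (wcode w) \<in> {1, 2}
      then Some (\<lambda>w. if p (wcode w) = 1 then P1 else P2) else None)"

definition rep_game :: "nat \<Rightarrow> game rep" where
  "rep_game n r = (case (rep_turn (\<lambda>i. r (2 * i)), rep_D n (\<lambda>i. r (2 * i + 1))) of
      (Some d, Some W) \<Rightarrow> Some (d, W) | _ \<Rightarrow> None)"

text \<open>Strategy profiles: functions {0,1}^* -> {0,1}, given by lookup tables.\<close>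
definition rep_profile :: "(bool list \<Rightarrow> bool) rep" where
  "rep_profile p = (if \<forall>w. p (wcode w) \<le> 1 then Some (\<lambda>w. p (wcode w) = 1) else None)"

definition consistent :: "game \<Rightarrow> player \<Rightarrow> (bool list \<Rightarrow> bool) \<Rightarrow> cantor \<Rightarrow> bool" where
  "consistent G i \<sigma> x \<longleftrightarrow>
     (\<forall>k. fst G (prefix_of x k) = i \<longrightarrow> x k = \<sigma> (prefix_of x k))"

definition wins :: "game \<Rightarrow> player \<Rightarrow> cantor \<Rightarrow> bool" where
  "wins G i x \<longleftrightarrow> (if i = P1 then x \<in> snd G else x \<notin> snd G)"

text \<open>Player i's strategy (the part of the profile at positions where i moves) is winning.\<close>
definition winning :: "game \<Rightarrow> player \<Rightarrow> (bool list \<Rightarrow> bool) \<Rightarrow> bool" where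
  "winning G i \<sigma> \<longleftrightarrow> (\<forall>x. consistent G i \<sigma> x \<longrightarrow> wins G i x)"

definition Det :: "game \<Rightarrow> (bool list \<Rightarrow> bool) set" where
  "Det G = {\<sigma>. winning G P1 \<sigma> \<or> winning G P2 \<sigma>}"

definition Win :: "game \<Rightarrow> player set" where
  "Win G = {i. \<exists>\<sigma>. winning G i \<sigma>}"

end

theory Submission
  imports Defs
begin


definition RF :: "(baire \<Rightarrow> nat \<Rightarrow> nat) \<Rightarrow> bool" where
  "RF f \<longleftrightarrow> (\<exists>c. \<forall>p x. ev p c x (f p x))"

lemma RF_I: "(\<And>p x. ev p c x (f p x)) \<Longrightarrow> RF f" unfolding RF_def by blast

lemma RF_cnst0: "RF (\<lambda>p x. 0)" by (rule RF_I[of Zer]) (rule ev_zer)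
lemma RF_Sc: "RF (\<lambda>p x. Suc x)" by (rule RF_I[of Sc]) (rule ev_sc)
lemma RF_Fs: "RF (\<lambda>p x. fst (prod_decode x))" by (rule RF_I[of Fs]) (rule ev_fs)
lemma RF_Sn: "RF (\<lambda>p x. snd (prod_decode x))" by (rule RF_I[of Sn]) (rule ev_sn)
lemma RF_Orc: "RF (\<lambda>p x. p x)" by (rule RF_I[of Orc]) (rule ev_orc)

lemma RF_comp: "RF f \<Longrightarrow> RF g \<Longrightarrow> RF (\<lambda>p x. f p (g p x))"
  unfolding RF_def by (metis ev_cmp)

lemma RF_pe: "RF f \<Longrightarrow> RF g \<Longrightarrow> RF (\<lambda>p x. prod_encode (f p x, g p x))"
  unfolding RF_def by (metis ev_pr)

lemma RF_var: "RF (\<lambda>p x. x)"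
proof -
  have "RF (\<lambda>p x. prod_encode (fst (prod_decode x), snd (prod_decode x)))"
    by (rule RF_pe[OF RF_Fs RF_Sn])
  thus ?thesis by simp
qed

lemma RF_iter0:
  assumes "RF s" shows "RF (\<lambda>p z. (s p ^^ snd (prod_decode z)) (fst (prod_decode z)))"
proof -
  obtain cs where cs: "\<And>p x. ev p cs x (s p x)" using assms unfolding RF_def by blast
  obtain ci where ci: "\<And>p x. ev p ci x x" using RF_var unfolding RF_def by blast
  let ?g = "Cmp cs (Cmp Sn Sn)"
  have g: "ev p ?g (prod_encode (x, prod_encode (k, y))) (s p y)" for p x k y
    by (rule ev_cmp[OF ev_cmp[OF ev_sn ev_sn]], simp, rule cs)
  have "ev p (Rec ci ?g) (prod_encode (x, k)) ((s p ^^ k) x)" for p x k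
  proof (induction k)
    case 0 then show ?case using ev_rec0[OF ci] by simp
  next
    case (Suc k) show ?case using ev_recS[OF Suc g] by simp
  qed
  hence "ev p (Rec ci ?g) z ((s p ^^ snd (prod_decode z)) (fst (prod_decode z)))" for p z
    by (metis prod.collapse prod_decode_inverse)
  thus ?thesis by (rule RF_I)
qed

lemma RF_Suc[intro]: "RF a \<Longrightarrow> RF (\<lambda>p x. Suc (a p x))"
  using RF_comp[OF RF_Sc] by blast
lemma RF_fst[intro]: "RF a \<Longrightarrow> RF (\<lambda>p x. fst (prod_decode (a p x)))"
  using RF_comp[OF RF_Fs] by blast
lemma RF_snd[intro]: "RF a \<Longrightarrow> RF (\<lambda>p x. snd (prod_decode (a p x)))"
  using RF_comp[OF RF_Sn] by blast
lemma RF_orc[intro]: "RF a \<Longrightarrow> RF (\<lambda>p x. p (a p x))"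
  using RF_comp[OF RF_Orc] by blast
lemmas RF_pe'[intro] = RF_pe
lemmas RF_var'[intro] = RF_var

lemma RF_cnst[intro]: "RF (\<lambda>p x. k)"
  by (induction k) (auto intro: RF_cnst0)

lemma RF_iter[intro]:
  assumes "RF s" "RF a" "RF b" shows "RF (\<lambda>p x. (s p ^^ b p x) (a p x))"
  using RF_comp[OF RF_iter0[OF assms(1)] RF_pe[OF assms(2) assms(3)]] by simp

lemma funpow_Suc_add: "(Suc ^^ b) a = a + b" by (induction b) auto

lemma RF_add[intro]: "RF a \<Longrightarrow> RF b \<Longrightarrow> RF (\<lambda>p x. a p x + b p x)"
proof -
  assume "RF a" "RF b"
  hence "RF (\<lambda>p x. (Suc ^^ b p x) (a p x))" using RF_Sc by (intro RF_iter)
  thus ?thesis by (simp only: funpow_Suc_add)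
qed

definition predstep :: "nat \<Rightarrow> nat" where
  "predstep y = prod_encode (snd (prod_decode y), Suc (snd (prod_decode y)))"

lemma predstep_pow: "(predstep ^^ n) (prod_encode (0,0)) = prod_encode (n - 1, n)"
  by (induction n) (auto simp: predstep_def)

lemma RF_pred[intro]: "RF a \<Longrightarrow> RF (\<lambda>p x. a p x - 1)"
proof -
  assume a: "RF a"
  have s: "RF (\<lambda>p y. predstep y)" unfolding predstep_def by (intro RF_pe' RF_snd RF_Suc RF_var)
  have "RF (\<lambda>p x. fst (prod_decode ((predstep ^^ a p x) (prod_encode (0,0)))))"
    by (intro RF_fst RF_iter[OF s] RF_cnst a)
  thus ?thesis by (simp add: predstep_pow)
qed

lemma funpow_pred: "((\<lambda>y. y - 1) ^^ b) a = a - b" by (induction b) auto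

lemma RF_sub[intro]: "RF a \<Longrightarrow> RF b \<Longrightarrow> RF (\<lambda>p x. a p x - b p x)"
proof -
  assume "RF a" "RF b"
  moreover have "RF (\<lambda>p y. y - 1)" by (intro RF_pred RF_var)
  ultimately have "RF (\<lambda>p x. ((\<lambda>y. y - 1) ^^ b p x) (a p x))" by (intro RF_iter)
  thus ?thesis by (simp only: funpow_pred)
qed

definition swp :: "nat \<Rightarrow> nat" where
  "swp y = prod_encode (snd (prod_decode y), snd (prod_decode y))"

lemma RF_ifz: "RF c \<Longrightarrow> RF a \<Longrightarrow> RF b \<Longrightarrow> RF (\<lambda>p x. if c p x = 0 then a p x else b p x)"
proof -
  assume h: "RF c" "RF a" "RF b"
  have s: "RF (\<lambda>p y. swp y)" unfolding swp_def by (intro RF_pe' RF_snd RF_var)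
  have "RF (\<lambda>p x. fst (prod_decode ((swp ^^ (1 - (1 - c p x))) (prod_encode (a p x, b p x)))))"
    by (intro RF_fst RF_iter[OF s] RF_pe' RF_sub RF_cnst h)
  moreover have "fst (prod_decode ((swp ^^ (1 - (1 - cc))) (prod_encode (aa, bb)))) = (if cc = 0 then aa else bb)" for cc aa bb
    by (cases cc) (auto simp: swp_def)
  ultimately show ?thesis by simp
qed

definition RFP :: "(baire \<Rightarrow> nat \<Rightarrow> bool) \<Rightarrow> bool" where
  "RFP P \<longleftrightarrow> RF (\<lambda>p x. if P p x then 0 else 1)"

lemma RF_if[intro]: "RFP P \<Longrightarrow> RF a \<Longrightarrow> RF b \<Longrightarrow> RF (\<lambda>p x. if P p x then a p x else b p x)"
proof -
  assume "RFP P" "RF a" "RF b"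
  hence "RF (\<lambda>p x. if (if P p x then 0 else 1) = (0::nat) then a p x else b p x)"
    unfolding RFP_def by (intro RF_ifz)
  thus ?thesis by (smt (verit) RF_def one_neq_zero)
qed

lemma RFP_zero: "RF a \<Longrightarrow> RFP (\<lambda>p x. a p x = 0)"
  unfolding RFP_def using RF_ifz[of a "\<lambda>p x. 0" "\<lambda>p x. 1"] by auto

lemma RFP_eq[intro]: "RF a \<Longrightarrow> RF b \<Longrightarrow> RFP (\<lambda>p x. a p x = b p x)"
proof -
  assume "RF a" "RF b"
  hence "RFP (\<lambda>p x. (a p x - b p x) + (b p x - a p x) = 0)" by (intro RFP_zero RF_add RF_sub)
  moreover have "((aa::nat) - bb) + (bb - aa) = 0 \<longleftrightarrow> aa = bb" for aa bb by auto
  ultimately show ?thesis by simp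
qed

lemma RFP_le[intro]: "RF a \<Longrightarrow> RF b \<Longrightarrow> RFP (\<lambda>p x. a p x \<le> b p x)"
proof -
  assume "RF a" "RF b"
  hence "RFP (\<lambda>p x. a p x - b p x = 0)" by (intro RFP_zero RF_sub)
  thus ?thesis by simp
qed

lemma RFP_less[intro]: "RF a \<Longrightarrow> RF b \<Longrightarrow> RFP (\<lambda>p x. a p x < b p x)"
proof -
  assume "RF a" "RF b"
  hence "RFP (\<lambda>p x. Suc (a p x) \<le> b p x)" by (intro RFP_le RF_Suc)
  thus ?thesis by (simp add: Suc_le_eq)
qed

lemma RFP_not[intro]: "RFP P \<Longrightarrow> RFP (\<lambda>p x. \<not> P p x)"
proof -
  assume "RFP P"
  hence "RF (\<lambda>p x. if P p x then 1 else 0)" by (intro RF_if RF_cnst)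
  moreover have "(\<lambda>p x. if \<not> P p x then (0::nat) else 1) = (\<lambda>p x. if P p x then 1 else 0)" by (intro ext) auto
  ultimately show ?thesis unfolding RFP_def by simp
qed

lemma RFP_conj[intro]: "RFP P \<Longrightarrow> RFP Q \<Longrightarrow> RFP (\<lambda>p x. P p x \<and> Q p x)"
proof -
  assume h: "RFP P" "RFP Q"
  have "RF (\<lambda>p x. if P p x then (if Q p x then 0 else 1) else 1)"
    using h by (intro RF_if RF_cnst) (simp_all add: RFP_def)
  moreover have "(\<lambda>p x. if P p x \<and> Q p x then (0::nat) else 1) = (\<lambda>p x. if P p x then (if Q p x then 0 else 1) else 1)"
    by (intro ext) auto
  ultimately show ?thesis unfolding RFP_def by simp
qed

lemma RFP_disj[intro]: "RFP P \<Longrightarrow> RFP Q \<Longrightarrow> RFP (\<lambda>p x. P p x \<or> Q p x)"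
proof -
  assume "RFP P" "RFP Q"
  hence "RFP (\<lambda>p x. \<not> (\<not> P p x \<and> \<not> Q p x))" by (intro RFP_not RFP_conj)
  thus ?thesis by simp
qed

lemma RFP_True[intro]: "RFP (\<lambda>p x. True)" unfolding RFP_def by auto
lemma RFP_False[intro]: "RFP (\<lambda>p x. False)" unfolding RFP_def by auto

definition hstep :: "nat \<Rightarrow> nat" where
  "hstep y = prod_encode (fst (prod_decode y) + snd (prod_decode y), 1 - snd (prod_decode y))"

lemma hstep_pow: "(hstep ^^ n) (prod_encode (0,0)) = prod_encode (n div 2, n mod 2)"
proof (induction n)
  case (Suc n) then show ?case by (simp add: hstep_def; presburger)
qed simp

lemma RF_hstep: "RF (\<lambda>p y. hstep y)" unfolding hstep_def by (intro RF_pe' RF_add RF_sub RF_fst RF_snd RF_var RF_cnst)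

lemma RF_div2[intro]: "RF a \<Longrightarrow> RF (\<lambda>p x. a p x div 2)"
proof -
  assume a: "RF a"
  have "RF (\<lambda>p x. fst (prod_decode ((hstep ^^ a p x) (prod_encode (0,0)))))"
    by (intro RF_fst RF_iter[OF RF_hstep] RF_cnst a)
  thus ?thesis by (simp add: hstep_pow)
qed

lemma RF_mod2[intro]: "RF a \<Longrightarrow> RF (\<lambda>p x. a p x mod 2)"
proof -
  assume a: "RF a"
  have "RF (\<lambda>p x. snd (prod_decode ((hstep ^^ a p x) (prod_encode (0,0)))))"
    by (intro RF_snd RF_iter[OF RF_hstep] RF_cnst a)
  thus ?thesis by (simp add: hstep_pow)
qed

lemma RFP_even[intro]: "RF a \<Longrightarrow> RFP (\<lambda>p x. even (a p x))"
proof -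
  assume "RF a"
  hence "RFP (\<lambda>p x. a p x mod 2 = 0)" by (intro RFP_zero RF_mod2)
  thus ?thesis by (simp add: even_iff_mod_2_eq_zero)
qed

lemma RF_compose: "RF (\<lambda>p y. f p y) \<Longrightarrow> RF a \<Longrightarrow> RF (\<lambda>p x. f p (a p x))"
  by (rule RF_comp)

lemma RF_compose0: "RF (\<lambda>p y. f y) \<Longrightarrow> RF a \<Longrightarrow> RF (\<lambda>p x. f (a p x))"
  by (rule RF_comp)

lemma RFP_compose0: "RFP (\<lambda>p y. f y) \<Longrightarrow> RF a \<Longrightarrow> RFP (\<lambda>p x. f (a p x))"
  unfolding RFP_def by (rule RF_comp[where f="\<lambda>p y. if f y then 0 else 1"])




datatype st = SI nat | SB nat | SQ nat bool "nat list" nat | SD nat bool "nat list"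

fun stp :: "nat \<Rightarrow> st \<Rightarrow> bool \<Rightarrow> st" where
  "stp N (SI c) a = (if a then SB c else SI (Suc c))"
| "stp N (SB i) a = (if N = 0 then SD i a [] else SQ i a [] 0)"
| "stp N (SQ i b ks c) a = (if a then (if Suc (length ks) = N then SD i b (ks @ [c]) else SQ i b (ks @ [c]) 0)
     else SQ i b ks (Suc c))"
| "stp N (SD i b ks) a = SD i b ks"

definition parse :: "nat \<Rightarrow> bool list \<Rightarrow> st" where
  "parse N w = foldl (stp N) (SI 0) w"

fun blocks :: "st \<Rightarrow> nat" where
  "blocks (SI c) = 0" | "blocks (SB i) = 0" | "blocks (SQ i b ks c) = length ks" | "blocks (SD i b ks) = length ks"

fun isSD :: "st \<Rightarrow> bool" where
  "isSD (SD i b ks) = True" | "isSD _ = False"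

fun okst :: "nat \<Rightarrow> st \<Rightarrow> bool" where
  "okst N (SQ i b ks c) = (length ks < N)" | "okst N (SD i b ks) = (length ks = N)" | "okst N _ = True"

fun tos :: "st \<Rightarrow> player" where
  "tos (SB i) = P2" | "tos (SQ i b ks c) = (if even (length ks) then P1 else P2)" | "tos _ = P1"

definition turn :: "nat \<Rightarrow> bool list \<Rightarrow> player" where
  "turn N w = tos (parse N w)"

definition stx :: "nat \<Rightarrow> cantor \<Rightarrow> nat \<Rightarrow> st" where
  "stx N x m = parse N (prefix_of x m)"

lemma prefix_of_Suc: "prefix_of x (Suc m) = prefix_of x m @ [x m]"
  by (simp add: prefix_of_def)

lemma stx_0[simp]: "stx N x 0 = SI 0" by (simp add: stx_def parse_def prefix_of_def)
lemma stx_Suc: "stx N x (Suc m) = stp N (stx N x m) (x m)"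
  by (simp add: stx_def parse_def prefix_of_Suc)

lemma okst_stp: "okst N s \<Longrightarrow> okst N (stp N s a)"
  by (cases s) auto

lemma okst_stx: "okst N (stx N x m)"
  by (induction m) (auto simp: stx_Suc okst_stp)

lemma blocks_stp: "okst N s \<Longrightarrow> blocks s \<le> blocks (stp N s a)"
  by (cases s) auto

lemma blocks_mono: "m \<le> m' \<Longrightarrow> blocks (stx N x m) \<le> blocks (stx N x m')"
proof (induction m' rule: dec_induct)
  case (step k) then show ?case using blocks_stp[OF okst_stx, of N x k "x k"] by (simp add: stx_Suc)
qed simp

lemma blocks_le: "blocks (stx N x m) \<le> N"
  using okst_stx[of N x m] by (cases "stx N x m") auto

lemma SD_stays: assumes "stx N x m = SD i b ks" "m \<le> m'" shows "stx N x m' = SD i b ks"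
  using assms(2) by (induction m' rule: dec_induct) (use assms(1) in \<open>auto simp: stx_Suc\<close>)

lemma SD_unique: "stx N x m = SD i b ks \<Longrightarrow> stx N x m' = SD i' b' ks' \<Longrightarrow> i = i' \<and> b = b' \<and> ks = ks'"
  using SD_stays[of N x m i b ks "max m m'"] SD_stays[of N x m' i' b' ks' "max m m'"] by auto

lemma eventually_const:
  fixes f :: "nat \<Rightarrow> nat"
  assumes "\<And>m m'. m \<le> m' \<Longrightarrow> f m \<le> f m'" "\<And>m. f m \<le> B"
  shows "\<exists>m0 j. \<forall>m\<ge>m0. f m = j"
proof -
  have fin: "finite (range f)" using assms(2) by (meson finite_atMost finite_subset image_subsetI atMost_iff)
  obtain m0 where m0: "f m0 = Max (range f)" using Max_in[OF fin] by auto
  have "\<forall>m\<ge>m0. f m = f m0" using assms(1) m0 fin by (metis Max_ge le_antisym rangeI)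
  thus ?thesis by blast
qed

lemma dset_iff: "x \<in> dset n U \<longleftrightarrow> (if \<exists>\<beta><n. x \<in> U \<beta> then (LEAST \<beta>. x \<in> U \<beta>) else n) mod 2 \<noteq> n mod 2"
  by (simp add: dset_def)

locale qgame =
  fixes N :: nat and Q :: "nat \<Rightarrow> bool \<Rightarrow> cantor"
begin

definition Vset :: "nat \<Rightarrow> cantor set" where
  "Vset k = {x. \<exists>m. k \<le> blocks (stx N x m)}"

definition Mset :: "cantor set" where
  "Mset = {x. \<exists>m i b ks kn. stx N x m = SD i b ks \<and> Q i b (list_encode (ks @ [kn])) = even (Suc N)}"

definition UU :: "nat \<Rightarrow> cantor set" where
  "UU \<beta> = (if \<beta> = 0 then Mset else if \<beta> < Suc N then Vset (Suc N - \<beta>) else {})"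

definition Dw :: "cantor set" where "Dw = dset (Suc N) UU"

definition game :: game where "game = (turn N, Dw)"

lemma diff_parity: "(j::nat) \<le> a \<Longrightarrow> ((a - j) mod 2 \<noteq> a mod 2) = odd j"
proof -
  assume "j \<le> a"
  then obtain d where "a = j + d" using le_Suc_ex by blast
  thus ?thesis by (auto simp: mod2_eq_if)
qed

lemma W2:
  assumes nsd: "\<forall>m. \<not> isSD (stx N x m)" and ev: "\<forall>m\<ge>m0. blocks (stx N x m) = j"
  shows "x \<in> Dw \<longleftrightarrow> odd j"
proof -
  have bj: "blocks (stx N x m) \<le> j" for m
  proof -
    have "blocks (stx N x m) \<le> blocks (stx N x (max m m0))" by (rule blocks_mono) simp
    also have "\<dots> = j" using ev by simp
    finally show ?thesis .
  qed
  have jN: "j \<le> N" using ev blocks_le[of N x m0] by simp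
  have nM: "x \<notin> Mset"
  proof
    assume "x \<in> Mset"
    then obtain m i b ks where "stx N x m = SD i b ks" unfolding Mset_def by blast
    thus False using nsd by (metis isSD.simps(1))
  qed
  have V: "x \<in> Vset k \<longleftrightarrow> k \<le> j" for k
  proof
    assume "x \<in> Vset k"
    then obtain m where "k \<le> blocks (stx N x m)" unfolding Vset_def by blast
    thus "k \<le> j" using bj[of m] by linarith
  next
    assume "k \<le> j" thus "x \<in> Vset k" unfolding Vset_def using ev by (metis (mono_tags, lifting) mem_Collect_eq order_refl)
  qed
  have U: "x \<in> UU \<beta> \<longleftrightarrow> 0 < \<beta> \<and> \<beta> < Suc N \<and> Suc N - \<beta> \<le> j" for \<beta>
    unfolding UU_def using nM V by simp
  show ?thesis
  proof (cases "j = 0")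
    case True
    then have "\<not> (\<exists>\<beta><Suc N. x \<in> UU \<beta>)" using U by auto
    then show ?thesis unfolding Dw_def dset_iff using True by auto
  next
    case False
    have ex: "\<exists>\<beta><Suc N. x \<in> UU \<beta>" using U False jN by (intro exI[of _ "Suc N - j"]) auto
    have L: "(LEAST \<beta>. x \<in> UU \<beta>) = Suc N - j"
    proof (rule Least_equality)
      show "x \<in> UU (Suc N - j)" using U False jN by simp
      fix y assume "x \<in> UU y"
      hence "Suc N - y \<le> j" "y < Suc N" using U by simp_all
      thus "Suc N - j \<le> y" by linarith
    qed
    have "(Suc N - j) mod 2 \<noteq> Suc N mod 2 \<longleftrightarrow> odd j" using diff_parity jN by simp
    then show ?thesis unfolding Dw_def dset_iff using ex L by simp
  qed
qed

lemma W1: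
  assumes sd: "stx N x m = SD i b ks"
  shows "x \<in> Dw \<longleftrightarrow> ((\<exists>kn. Q i b (list_encode (ks @ [kn])) = even (Suc N)) = odd (Suc N))"
proof -
  have len: "length ks = N" using okst_stx[of N x m] sd by simp
  have M: "x \<in> Mset \<longleftrightarrow> (\<exists>kn. Q i b (list_encode (ks @ [kn])) = even (Suc N))"
  proof
    assume "x \<in> Mset"
    then obtain m' i' b' ks' kn where a: "stx N x m' = SD i' b' ks'" and q: "Q i' b' (list_encode (ks' @ [kn])) = even (Suc N)"
      unfolding Mset_def by blast
    have "i = i' \<and> b = b' \<and> ks = ks'" by (rule SD_unique[OF sd a])
    thus "\<exists>kn. Q i b (list_encode (ks @ [kn])) = even (Suc N)" using q by blast
  next
    assume "\<exists>kn. Q i b (list_encode (ks @ [kn])) = even (Suc N)"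
    then obtain kn where "Q i b (list_encode (ks @ [kn])) = even (Suc N)" by blast
    thus "x \<in> Mset" unfolding Mset_def using sd by blast
  qed
  have V: "x \<in> Vset N" unfolding Vset_def
  proof
    show "\<exists>m. N \<le> blocks (stx N x m)" using sd len by (intro exI[of _ m]) simp
  qed
  show ?thesis
  proof (cases "x \<in> Mset")
    case True
    have ex: "\<exists>\<beta><Suc N. x \<in> UU \<beta>" using True by (intro exI[of _ 0]) (simp add: UU_def)
    have L: "(LEAST \<beta>. x \<in> UU \<beta>) = 0" using True by (simp add: UU_def)
    show ?thesis unfolding Dw_def dset_iff using ex L True M by (simp add: mod2_eq_if)
  next
    case False
    show ?thesis
    proof (cases N)
      case 0
      have u0: "x \<notin> UU 0" using False by (simp add: UU_def)
      have "\<not> (\<exists>\<beta><Suc N. x \<in> UU \<beta>)"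
      proof
        assume "\<exists>\<beta><Suc N. x \<in> UU \<beta>"
        then obtain \<beta> where "\<beta> < Suc N" "x \<in> UU \<beta>" by blast
        moreover have "\<beta> = 0" using \<open>\<beta> < Suc N\<close> \<open>N = 0\<close> by simp
        ultimately show False using u0 by simp
      qed
      then show ?thesis unfolding Dw_def dset_iff using False M 0 by auto
    next
      case (Suc N')
      have l1: "(1::nat) < Suc N" using Suc by simp
      have u1: "x \<in> UU 1" using V l1 by (simp add: UU_def)
      have ex: "\<exists>\<beta><Suc N. x \<in> UU \<beta>" using u1 l1 by blast
      have u0: "x \<notin> UU 0" using False by (simp add: UU_def)
      have L: "(LEAST \<beta>. x \<in> UU \<beta>) = 1"
      proof (rule Least_equality)
        show "x \<in> UU 1" by (rule u1)
        fix y assume "x \<in> UU y" thus "1 \<le> y" using u0 by (cases y) auto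
      qed
      have "(1::nat) mod 2 \<noteq> Suc N mod 2 \<longleftrightarrow> odd N" by (simp add: mod2_eq_if)
      then show ?thesis unfolding Dw_def dset_iff using ex L False M by simp
    qed
  qed
qed

definition AA :: "nat \<Rightarrow> bool \<Rightarrow> nat list \<Rightarrow> bool" where
  "AA i b ks = alt (even (length ks)) (Suc N - length ks) (\<lambda>ks. Q i b (list_encode ks)) ks"

lemma phi_AA: "phi (Suc N) (Q i b) = AA i b []"
  by (simp add: phi_def AA_def)

lemma alt_step: "alt b (Suc m) P ks = (if b then (\<forall>k. alt False m P (ks @ [k])) else (\<exists>k. alt True m P (ks @ [k])))"
  by (cases b) auto

lemma AA_step: "length ks \<le> N \<Longrightarrow>
  AA i b ks = (if even (length ks) then (\<forall>k. AA i b (ks @ [k])) else (\<exists>k. AA i b (ks @ [k])))"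
  unfolding AA_def by (simp add: Suc_diff_le alt_step)

lemma AA_end: "length ks = N \<Longrightarrow>
  AA i b ks = (if even N then (\<forall>k. Q i b (list_encode (ks @ [k]))) else (\<exists>k. Q i b (list_encode (ks @ [k]))))"
  by (simp add: AA_step) (simp add: AA_def)

definition gw :: "bool \<Rightarrow> nat \<Rightarrow> bool \<Rightarrow> nat list \<Rightarrow> nat" where
  "gw pol i b ks = (SOME k. AA i b (ks @ [k]) = pol)"

lemma Qphase:
  assumes cons: "consistent game pl \<sigma> x"
    and pl: "pl = (if pol then P2 else P1)"
    and strat: "\<And>w i' b' ks c. parse N w = SQ i' b' ks c \<Longrightarrow> (even (length ks) \<noteq> pol) \<Longrightarrow> \<sigma> w = (c = gw pol i' b' ks)"
    and init: "stx N x m1 = (if N = 0 then SD i b [] else SQ i b [] 0)"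
    and A0: "AA i b [] = pol"
  shows "x \<in> Dw \<longleftrightarrow> \<not> pol"
proof -
  define Inv where "Inv m \<longleftrightarrow> (\<exists>ks c. stx N x m = SQ i b ks c \<and> AA i b ks = pol \<and> (even (length ks) \<noteq> pol \<longrightarrow> c \<le> gw pol i b ks))
     \<or> (\<exists>ks. stx N x m = SD i b ks \<and> AA i b ks = pol)" for m
  have mv: "x m = (c = gw pol i' b' ks)" if "stx N x m = SQ i' b' ks c" "even (length ks) \<noteq> pol" for m i' b' ks c
  proof -
    have "turn N (prefix_of x m) = pl" using that pl by (auto simp: turn_def stx_def[symmetric])
    hence "x m = \<sigma> (prefix_of x m)" using cons by (simp add: consistent_def game_def)
    thus ?thesis using strat that by (simp add: stx_def)
  qed
  have inv: "Inv m" if "m1 \<le> m" for m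
    using that
  proof (induction m rule: dec_induct)
    case base show ?case using init A0 unfolding Inv_def by (cases "N = 0") auto
  next
    case (step m)
    from step.IH[unfolded Inv_def] show ?case
    proof (elim disjE exE conjE)
      fix ks c assume s: "stx N x m = SQ i b ks c" and a: "AA i b ks = pol"
        and cc: "even (length ks) \<noteq> pol \<longrightarrow> c \<le> gw pol i b ks"
      have lk: "length ks < N" using okst_stx[of N x m] s by simp
      have AS: "AA i b ks = (if even (length ks) then (\<forall>k. AA i b (ks @ [k])) else (\<exists>k. AA i b (ks @ [k])))"
        using AA_step lk by simp
      show ?thesis
      proof (cases "even (length ks) \<noteq> pol")
        case True
        have ex: "\<exists>k. AA i b (ks @ [k]) = pol" using AS a True by (cases pol) auto
        have g: "AA i b (ks @ [gw pol i b ks]) = pol" unfolding gw_def using someI_ex[OF ex] .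
        have xm: "x m = (c = gw pol i b ks)" using mv[OF s True] .
        show ?thesis
        proof (cases "c = gw pol i b ks")
          case True
          then show ?thesis using xm g s by (auto simp: stx_Suc Inv_def)
        next
          case False
          then show ?thesis using xm s a cc \<open>even (length ks) \<noteq> pol\<close> by (auto simp: stx_Suc Inv_def)
        qed
      next
        case False
        have all: "AA i b (ks @ [k]) = pol" for k using AS a False by (cases pol) auto
        show ?thesis using s a False all by (cases "x m") (auto simp: stx_Suc Inv_def)
      qed
    next
      fix ks assume "stx N x m = SD i b ks" "AA i b ks = pol"
      then show ?thesis by (auto simp: stx_Suc Inv_def)
    qed
  qed
  show ?thesis
  proof (cases "\<exists>m. isSD (stx N x m)")
    case True
    then obtain m2 i2 b2 ks2 where m2: "stx N x m2 = SD i2 b2 ks2"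
      by (metis isSD.elims(2))
    have "Inv (max m1 m2)" by (rule inv) simp
    moreover have sd: "stx N x (max m1 m2) = SD i2 b2 ks2" using SD_stays[OF m2] by simp
    ultimately have sd': "stx N x (max m1 m2) = SD i b ks2" and a: "AA i b ks2 = pol"
      unfolding Inv_def by auto
    have len: "length ks2 = N" using okst_stx[of N x "max m1 m2"] sd' by simp
    show ?thesis unfolding W1[OF sd'] using AA_end[OF len, of i b] a by (cases pol; auto)
  next
    case False
    hence nsd: "\<forall>m. \<not> isSD (stx N x m)" by blast
    obtain m0 j where ev0: "\<forall>m\<ge>m0. blocks (stx N x m) = j"
      using eventually_const[of "\<lambda>m. blocks (stx N x m)" N] blocks_mono blocks_le by blast
    define m3 where "m3 = max m0 m1"
    have ev: "\<forall>m\<ge>m3. blocks (stx N x m) = j" using ev0 m3_def by auto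
    obtain ks c where s3: "stx N x m3 = SQ i b ks c" and a3: "AA i b ks = pol"
      and c3: "even (length ks) \<noteq> pol \<longrightarrow> c \<le> gw pol i b ks"
      using inv[of m3] nsd unfolding Inv_def m3_def by (metis isSD.simps(1) max.cobounded2)
    have lj: "length ks = j" using ev s3 by (metis blocks.simps(3) order_refl)
    have run: "stx N x (m3 + t) = SQ i b ks (c + t)" for t
    proof (induction t)
      case 0 then show ?case using s3 by simp
    next
      case (Suc t)
      have "x (m3 + t) = False"
      proof (rule ccontr)
        assume "x (m3 + t) \<noteq> False"
        hence "blocks (stx N x (Suc (m3 + t))) = Suc j"
          using Suc lj nsd[rule_format, of "Suc (m3+t)"] by (auto simp: stx_Suc split: if_splits)
        moreover have "blocks (stx N x (Suc (m3 + t))) = j" using ev by simp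
        ultimately show False by simp
      qed
      then show ?case using Suc by (simp add: stx_Suc)
    qed
    have "even j = pol"
    proof (rule ccontr)
      assume h: "even j \<noteq> pol"
      let ?t = "Suc (gw pol i b ks)"
      have "Inv (m3 + ?t)" by (rule inv) (simp add: m3_def)
      hence "c + ?t \<le> gw pol i b ks" using run[of ?t] h lj unfolding Inv_def by auto
      thus False by simp
    qed
    then show ?thesis using W2[OF nsd ev] by auto
  qed
qed


definition ref :: "nat \<Rightarrow> bool list \<Rightarrow> bool" where
  "ref i w = (case parse N w of SI c \<Rightarrow> c = i | SQ i' b ks c \<Rightarrow> c = gw False i' b ks | _ \<Rightarrow> False)"

definition bsel :: "nat \<Rightarrow> bool" where "bsel i = (SOME b. phi (Suc N) (Q i b))"

definition dfd :: "bool list \<Rightarrow> bool" where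
  "dfd w = (case parse N w of SB i \<Rightarrow> bsel i | SQ i b ks c \<Rightarrow> c = gw True i b ks | _ \<Rightarrow> False)"

lemma cons_move: "consistent game pl \<sigma> x \<Longrightarrow> tos (stx N x k) = pl \<Longrightarrow> x k = \<sigma> (prefix_of x k)"
  by (simp add: consistent_def game_def turn_def stx_def)

lemma ref_SI:
  assumes cons: "consistent game P1 (ref i) x"
  shows "k \<le> i \<Longrightarrow> stx N x k = SI k"
proof (induction k)
  case (Suc k)
  hence s: "stx N x k = SI k" by simp
  have "x k = ref i (prefix_of x k)" using cons_move[OF cons] s by simp
  hence "x k = False" using s Suc.prems by (simp add: ref_def stx_def[symmetric])
  thus ?case using s by (simp add: stx_Suc)
qed simp

lemma ref_xi:
  assumes cons: "consistent game P1 (ref i) x" and that: "k \<le> i"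
  shows "x k = (k = i)"
proof -
  have s: "stx N x k = SI k" using ref_SI[OF cons that] .
  have "x k = ref i (prefix_of x k)" using cons_move[OF cons] s by simp
  thus ?thesis using s by (simp add: ref_def stx_def[symmetric])
qed

lemma ref_prefix:
  assumes cons: "consistent game P1 (ref i) x"
  shows "prefix_of x (Suc i) = replicate i False @ [True]"
  unfolding prefix_of_def
  by (rule nth_equalityI) (auto simp: ref_xi[OF cons] nth_append)

lemma ref_SB:
  assumes cons: "consistent game P1 (ref i) x"
  shows "stx N x (Suc i) = SB i"
  using ref_SI[OF cons, of i] ref_xi[OF cons, of i] by (simp add: stx_Suc)

lemma ref_wins:
  assumes cons: "consistent game P1 (ref i) x" and nphi: "\<not> phi (Suc N) (Q i (x (Suc i)))"
  shows "x \<in> Dw"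
proof -
  have init: "stx N x (Suc (Suc i)) = (if N = 0 then SD i (x (Suc i)) [] else SQ i (x (Suc i)) [] 0)"
    using ref_SB[OF cons] by (simp add: stx_Suc)
  have "x \<in> Dw \<longleftrightarrow> \<not> False"
    by (rule Qphase[OF cons _ _ init]) (use nphi in \<open>auto simp: ref_def phi_AA\<close>)
  thus ?thesis by simp
qed

lemma dfd_wins:
  assumes hdom: "\<forall>i. \<exists>b. phi (Suc N) (Q i b)" and cons: "consistent game P2 dfd x"
  shows "x \<notin> Dw"
proof (cases "\<exists>m i. stx N x m = SB i")
  case True
  then obtain m i where s: "stx N x m = SB i" by blast
  have "x m = dfd (prefix_of x m)" using cons_move[OF cons] s by simp
  hence xm: "x m = bsel i" using s by (simp add: dfd_def stx_def[symmetric])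
  have init: "stx N x (Suc m) = (if N = 0 then SD i (bsel i) [] else SQ i (bsel i) [] 0)"
    using s xm by (simp add: stx_Suc)
  have ph: "phi (Suc N) (Q i (bsel i))" unfolding bsel_def using hdom by (metis someI_ex)
  have "x \<in> Dw \<longleftrightarrow> \<not> True"
    by (rule Qphase[OF cons _ _ init]) (use ph in \<open>auto simp: dfd_def phi_AA\<close>)
  thus ?thesis by simp
next
  case False
  have si: "stx N x m = SI m" for m
  proof (induction m)
    case (Suc m)
    have "stx N x (Suc m) \<noteq> SB m" using False by blast
    then show ?case using Suc by (cases "x m") (auto simp: stx_Suc)
  qed simp
  have "x \<in> Dw \<longleftrightarrow> odd (0::nat)"
    by (rule W2[of x 0]) (simp_all add: si)
  thus ?thesis by simp
qed

fun plw :: "(bool list \<Rightarrow> bool) \<Rightarrow> nat \<Rightarrow> bool list" where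
  "plw \<tau> 0 = []" | "plw \<tau> (Suc k) = plw \<tau> k @ [\<tau> (plw \<tau> k)]"

definition play_of :: "(bool list \<Rightarrow> bool) \<Rightarrow> cantor" where
  "play_of \<tau> k = \<tau> (plw \<tau> k)"

lemma prefix_play: "prefix_of (play_of \<tau>) k = plw \<tau> k"
proof (induction k)
  case 0 then show ?case by (simp add: prefix_of_def)
next
  case (Suc k) then show ?case by (simp add: prefix_of_Suc play_of_def)
qed

definition comb :: "(bool list \<Rightarrow> bool) \<Rightarrow> (bool list \<Rightarrow> bool) \<Rightarrow> bool list \<Rightarrow> bool" where
  "comb s1 s2 w = (if turn N w = P1 then s1 w else s2 w)"

lemma comb_cons1: "consistent game P1 s1 (play_of (comb s1 s2))"
  by (simp add: consistent_def game_def prefix_play) (simp add: play_of_def comb_def)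

lemma comb_cons2: "consistent game P2 s2 (play_of (comb s1 s2))"
  unfolding consistent_def game_def prefix_play
  by (auto simp: play_of_def comb_def)

lemma excl: "winning game P1 s1 \<Longrightarrow> winning game P2 s2 \<Longrightarrow> False"
  using comb_cons1[of s1 s2] comb_cons2[of s2 s1]
  unfolding winning_def wins_def game_def by auto

lemma dfd_winning: "\<forall>i. \<exists>b. phi (Suc N) (Q i b) \<Longrightarrow> winning game P2 dfd"
  unfolding winning_def wins_def using dfd_wins by (auto simp: game_def)

lemma ref_winning: "\<forall>b. \<not> phi (Suc N) (Q i b) \<Longrightarrow> winning game P1 (ref i)"
  unfolding winning_def wins_def using ref_wins by (auto simp: game_def)

lemma extract_lem:
  assumes hdom: "\<forall>i. \<exists>b. phi (Suc N) (Q i b)" and hsig: "\<sigma> \<in> Det game"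
  shows "phi (Suc N) (Q i (\<sigma> (replicate i False @ [True])))"
proof (rule ccontr)
  assume nphi: "\<not> ?thesis"
  have w2: "winning game P2 \<sigma>" using hsig excl dfd_winning[OF hdom] unfolding Det_def by blast
  let ?x = "play_of (comb (ref i) \<sigma>)"
  have c1: "consistent game P1 (ref i) ?x" by (rule comb_cons1)
  have pre: "prefix_of ?x (Suc i) = replicate i False @ [True]" by (rule ref_prefix[OF c1])
  have "tos (stx N ?x (Suc i)) = P2" using ref_SB[OF c1] by simp
  hence "?x (Suc i) = \<sigma> (prefix_of ?x (Suc i))" using cons_move[OF comb_cons2] by blast
  hence "?x (Suc i) = \<sigma> (replicate i False @ [True])" using pre by simp
  hence "?x \<in> Dw" using ref_wins[OF c1] nphi by simp
  moreover have "?x \<notin> Dw" using w2 comb_cons2 unfolding winning_def wins_def game_def by auto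
  ultimately show False by simp
qed

lemma Win_P1: "\<forall>b. \<not> phi (Suc N) (Q i b) \<Longrightarrow> Win game = {P1}"
  unfolding Win_def using ref_winning excl by (auto, metis player.exhaust)

lemma Win_P2: "\<forall>i. \<exists>b. phi (Suc N) (Q i b) \<Longrightarrow> Win game = {P2}"
  unfolding Win_def using dfd_winning excl by (auto, metis player.exhaust)

end




fun wdec :: "nat \<Rightarrow> bool list" where
  "wdec 0 = []"
| "wdec (Suc j) = odd j # wdec (j div 2)"

lemma wcode_wdec[simp]: "wcode (wdec j) = j"
  by (induction j rule: wdec.induct) auto

lemma wdec_wcode[simp]: "wdec (wcode w) = w"
proof (induction w)
  case (Cons b w) then show ?case by (cases b) auto
qed simp

lemma length_wcode: "length w \<le> wcode w"
  by (induction w) auto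

definition bn :: "bool \<Rightarrow> nat" where "bn b = (if b then 1 else 0)"

fun encst :: "st \<Rightarrow> nat" where
  "encst (SI c) = prod_encode (0, c)"
| "encst (SB i) = prod_encode (1, i)"
| "encst (SQ i b ks c) = prod_encode (2, prod_encode (i, prod_encode (bn b, prod_encode (list_encode (rev ks), prod_encode (length ks, c)))))"
| "encst (SD i b ks) = prod_encode (3, prod_encode (i, prod_encode (bn b, prod_encode (list_encode (rev ks), prod_encode (length ks, 0)))))"

definition tg :: "nat \<Rightarrow> nat" where "tg s = fst (prod_decode s)"
definition bd :: "nat \<Rightarrow> nat" where "bd s = snd (prod_decode s)"
definition fI :: "nat \<Rightarrow> nat" where "fI s = fst (prod_decode (bd s))"
definition fB :: "nat \<Rightarrow> nat" where "fB s = fst (prod_decode (snd (prod_decode (bd s))))"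
definition fR :: "nat \<Rightarrow> nat" where "fR s = fst (prod_decode (snd (prod_decode (snd (prod_decode (bd s))))))"
definition fL :: "nat \<Rightarrow> nat" where "fL s = fst (prod_decode (snd (prod_decode (snd (prod_decode (snd (prod_decode (bd s))))))))"
definition fC :: "nat \<Rightarrow> nat" where "fC s = snd (prod_decode (snd (prod_decode (snd (prod_decode (snd (prod_decode (bd s))))))))"

definition mkQ :: "nat \<Rightarrow> nat \<Rightarrow> nat \<Rightarrow> nat \<Rightarrow> nat \<Rightarrow> nat \<Rightarrow> nat" where
  "mkQ t i b r l c = prod_encode (t, prod_encode (i, prod_encode (b, prod_encode (r, prod_encode (l, c)))))"

definition astep :: "nat \<Rightarrow> nat \<Rightarrow> nat \<Rightarrow> nat" where
  "astep N s a =
    (if tg s = 0 then (if a = 0 then prod_encode (0, Suc (bd s)) else prod_encode (1, bd s))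
     else if tg s = 1 then (if N = 0 then mkQ 3 (bd s) a 0 0 0 else mkQ 2 (bd s) a 0 0 0)
     else if tg s = 2 then
       (if a = 0 then mkQ 2 (fI s) (fB s) (fR s) (fL s) (Suc (fC s))
        else if Suc (fL s) = N then mkQ 3 (fI s) (fB s) (Suc (prod_encode (fC s, fR s))) (Suc (fL s)) 0
        else mkQ 2 (fI s) (fB s) (Suc (prod_encode (fC s, fR s))) (Suc (fL s)) 0)
     else s)"

lemmas fld_defs = tg_def bd_def fI_def fB_def fR_def fL_def fC_def

lemma astep_correct: "astep N (encst s) (bn a) = encst (stp N s a)"
  by (cases s) (auto simp: astep_def fld_defs mkQ_def bn_def)

definition pstep :: "nat \<Rightarrow> nat \<Rightarrow> nat" where
  "pstep N y = (if snd (prod_decode y) = 0 then y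
     else prod_encode (astep N (fst (prod_decode y)) (if even (snd (prod_decode y)) then 1 else 0),
                       (snd (prod_decode y) - 1) div 2))"

lemma pstep_fix: "(pstep N ^^ f) (prod_encode (e, 0)) = prod_encode (e, 0)"
  by (induction f) (auto simp: pstep_def)

lemma pstep_run: "length w \<le> f \<Longrightarrow>
  (pstep N ^^ f) (prod_encode (encst s, wcode w)) = prod_encode (encst (foldl (stp N) s w), 0)"
proof (induction w arbitrary: s f)
  case Nil then show ?case by (simp add: pstep_fix)
next
  case (Cons b w)
  then obtain f' where f: "f = Suc f'" and lf: "length w \<le> f'" by (cases f) auto
  have r: "wcode (b # w) \<noteq> 0" by simp
  have ev: "(if even (wcode (b # w)) then 1 else 0) = bn b" by (cases b) (auto simp: bn_def)
  have d: "(wcode (b # w) - 1) div 2 = wcode w" by (cases b) auto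
  have "pstep N (prod_encode (encst s, wcode (b # w))) = prod_encode (encst (stp N s b), wcode w)"
    unfolding pstep_def using r ev d by (simp only: prod_encode_inverse fst_conv snd_conv if_False astep_correct)
  then show ?case using Cons.IH[OF lf] f by (simp add: funpow_Suc_right del: funpow.simps)
qed

definition aparse :: "nat \<Rightarrow> nat \<Rightarrow> nat" where
  "aparse N j = fst (prod_decode ((pstep N ^^ j) (prod_encode (prod_encode (0, 0), j))))"

lemma aparse_correct: "aparse N (wcode w) = encst (parse N w)"
proof -
  have "(pstep N ^^ wcode w) (prod_encode (encst (SI 0), wcode w)) = prod_encode (encst (parse N w), 0)"
    using pstep_run[where s="SI 0" and f="wcode w" and w=w and N=N, OF length_wcode] by (simp add: parse_def)
  thus ?thesis by (simp add: aparse_def)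
qed

lemma aparse_wdec: "aparse N j = encst (parse N (wdec j))"
  using aparse_correct[of N "wdec j"] by simp

definition rstep :: "nat \<Rightarrow> nat" where
  "rstep y = (if snd (prod_decode y) = 0 then y
     else prod_encode (Suc (prod_encode (fst (prod_decode (snd (prod_decode y) - 1)), fst (prod_decode y))),
                       snd (prod_decode (snd (prod_decode y) - 1))))"

lemma length_le_list_encode: "length l \<le> list_encode l"
proof (induction l)
  case (Cons a l) then show ?case using le_prod_encode_2[of "list_encode l" a] by simp
qed simp

lemma rstep_fix: "(rstep ^^ f) (prod_encode (e, 0)) = prod_encode (e, 0)"
  by (induction f) (auto simp: rstep_def)

lemma rstep_run: "length l \<le> f \<Longrightarrow>
  (rstep ^^ f) (prod_encode (list_encode acc, list_encode l)) = prod_encode (list_encode (rev l @ acc), 0)"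
proof (induction l arbitrary: acc f)
  case Nil then show ?case by (simp add: rstep_fix)
next
  case (Cons a l)
  then obtain f' where f: "f = Suc f'" and lf: "length l \<le> f'" by (cases f) auto
  have "rstep (prod_encode (list_encode acc, list_encode (a # l))) = prod_encode (list_encode (a # acc), list_encode l)"
    by (simp add: rstep_def)
  then show ?case using Cons.IH[OF lf, of "a # acc"] f by (simp add: funpow_Suc_right del: funpow.simps)
qed

definition arev :: "nat \<Rightarrow> nat" where
  "arev r = fst (prod_decode ((rstep ^^ r) (prod_encode (0, r))))"

lemma arev_correct: "arev (list_encode l) = list_encode (rev l)"
  using rstep_run[OF length_le_list_encode, of l "[]"] by (simp add: arev_def)

section \<open>Computability of the pieces\<close>

lemma RF_astep: "RF a \<Longrightarrow> RF b \<Longrightarrow> RF (\<lambda>p x. astep N (a p x) (b p x))"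
  unfolding astep_def fld_defs mkQ_def
  by (intro RF_if RF_pe' RF_Suc RF_fst RF_snd RFP_eq RF_cnst RFP_conj RFP_not) assumption+


lemma RF_pstep: "RF (\<lambda>p y. pstep N y)"
  unfolding pstep_def
  by (intro RF_if RF_pe' RF_astep RF_div2 RF_sub RF_fst RF_snd RFP_eq RFP_even RF_cnst RF_var)

lemma RF_aparse: "RF a \<Longrightarrow> RF (\<lambda>p x. aparse N (a p x))"
  unfolding aparse_def by (intro RF_fst RF_iter[OF RF_pstep] RF_pe' RF_cnst) assumption+

lemma RF_rstep: "RF (\<lambda>p y. rstep y)"
  unfolding rstep_def
  by (intro RF_if RF_pe' RF_Suc RF_sub RF_fst RF_snd RFP_eq RF_cnst RF_var)

lemma RF_arev: "RF a \<Longrightarrow> RF (\<lambda>p x. arev (a p x))"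
  unfolding arev_def by (intro RF_fst RF_iter[OF RF_rstep] RF_pe' RF_cnst) assumption+

lemma RFP_if[intro]: "RFP C \<Longrightarrow> RFP A \<Longrightarrow> RFP B \<Longrightarrow> RFP (\<lambda>p x. if C p x then A p x else B p x)"
proof -
  assume h: "RFP C" "RFP A" "RFP B"
  have "RF (\<lambda>p x. if C p x then (if A p x then 0 else 1) else (if B p x then 0 else 1))"
    by (intro RF_if RF_cnst h)
  moreover have "(\<lambda>p x. if (if C p x then A p x else B p x) then (0::nat) else 1) =
     (\<lambda>p x. if C p x then (if A p x then 0 else 1) else (if B p x then 0 else 1))" by (intro ext) auto
  ultimately show ?thesis unfolding RFP_def by simp
qed

lemma RFP_const: "RFP (\<lambda>p x. c)" by (cases c) auto

definition tval :: "nat \<Rightarrow> nat" where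
  "tval s = (if tg s = 1 then 2 else if tg s = 2 \<and> odd (fL s) then 2 else 1)"

definition blA :: "nat \<Rightarrow> nat" where
  "blA s = (if tg s = 2 \<or> tg s = 3 then fL s else 0)"

definition Uen :: "nat \<Rightarrow> (baire \<Rightarrow> nat \<Rightarrow> nat) \<Rightarrow> baire \<Rightarrow> nat \<Rightarrow> nat" where
  "Uen N qa p t =
   (if fst (prod_decode t) = 0 then
     (if tg (aparse N (fst (prod_decode (snd (prod_decode t))))) = 3 \<and>
         (if even (Suc N) then
            qa p (prod_encode (fI (aparse N (fst (prod_decode (snd (prod_decode t))))),
                  prod_encode (fB (aparse N (fst (prod_decode (snd (prod_decode t))))),
                    arev (Suc (prod_encode (snd (prod_decode (snd (prod_decode t))), fR (aparse N (fst (prod_decode (snd (prod_decode t)))))))))))  = 1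
          else
            qa p (prod_encode (fI (aparse N (fst (prod_decode (snd (prod_decode t))))),
                  prod_encode (fB (aparse N (fst (prod_decode (snd (prod_decode t))))),
                    arev (Suc (prod_encode (snd (prod_decode (snd (prod_decode t))), fR (aparse N (fst (prod_decode (snd (prod_decode t)))))))))))  \<noteq> 1)
      then Suc (fst (prod_decode (snd (prod_decode t)))) else 0)
    else if fst (prod_decode t) < Suc N then
      (if Suc N - fst (prod_decode t) \<le> blA (aparse N (snd (prod_decode t))) then Suc (snd (prod_decode t)) else 0)
    else 0)"

definition HF :: "nat \<Rightarrow> (baire \<Rightarrow> nat \<Rightarrow> nat) \<Rightarrow> baire \<Rightarrow> nat \<Rightarrow> nat" where
  "HF N qa p idx = (if even idx then tval (aparse N (idx div 2)) else Uen N qa p (idx div 2))"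

lemma RF_HF: assumes q: "RF qa" shows "RF (HF N qa)"
proof -
  have q': "RF g \<Longrightarrow> RF (\<lambda>p x. qa p (g p x))" for g using RF_comp[OF q] .
  have "RF (\<lambda>p idx. HF N qa p idx)"
    unfolding HF_def Uen_def tval_def blA_def tg_def fI_def fB_def fR_def fL_def bd_def
    by (intro RF_if q' RF_pe' RF_Suc RF_arev RF_aparse RF_div2 RF_sub RF_fst RF_snd
        RFP_conj RFP_disj RFP_not RFP_if RFP_eq RFP_le RFP_less RFP_even RFP_const RF_cnst RF_var)
  thus ?thesis by simp
qed




definition Qof :: "(baire \<Rightarrow> nat \<Rightarrow> nat) \<Rightarrow> baire \<Rightarrow> nat \<Rightarrow> bool \<Rightarrow> cantor" where
  "Qof qa p i b m = (qa p (prod_encode (i, prod_encode (bn b, m))) = 1)"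

lemma tval_enc: "tval (encst s) = (if tos s = P1 then 1 else 2)"
  by (cases s) (auto simp: tval_def fld_defs)

lemma blA_enc: "blA (encst s) = blocks s"
  by (cases s) (auto simp: blA_def fld_defs)

lemma arev_cons: "arev (Suc (prod_encode (k, list_encode l))) = list_encode (rev l @ [k])"
  using arev_correct[of "k # l"] by simp

lemma Uen0: "Uen N qa p (prod_encode (0, prod_encode (j1, kn))) =
  (if \<exists>i b ks. parse N (wdec j1) = SD i b ks \<and> Qof qa p i b (list_encode (ks @ [kn])) = even (Suc N) then Suc j1 else 0)"
  unfolding Uen_def aparse_wdec
  by (cases "parse N (wdec j1)") (auto simp: fld_defs arev_cons Qof_def bn_def)

lemma UenV: "0 < \<beta> \<Longrightarrow> \<beta> < Suc N \<Longrightarrow> Uen N qa p (prod_encode (\<beta>, j)) =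
  (if Suc N - \<beta> \<le> blocks (parse N (wdec j)) then Suc j else 0)"
  unfolding Uen_def aparse_wdec by (simp add: blA_enc)

lemma UenE: "Suc N \<le> \<beta> \<Longrightarrow> Uen N qa p (prod_encode (\<beta>, j)) = 0"
  unfolding Uen_def by simp

lemma if_Suc_eq: "(if P then Suc a else 0) = Suc b \<Longrightarrow> P \<and> a = b" by (cases P) auto

lemma length_prefix_of[simp]: "length (prefix_of x m) = m" by (simp add: prefix_of_def)

lemma open_M: "open_of (\<lambda>j. Uen N qa p (prod_encode (0, j))) = qgame.Mset N (Qof qa p)"
proof (intro set_eqI iffI)
  fix x assume "x \<in> open_of (\<lambda>j. Uen N qa p (prod_encode (0, j)))"
  then obtain j w where r: "Uen N qa p (prod_encode (0, j)) = Suc (wcode w)" and pw: "prefix_of x (length w) = w"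
    unfolding open_of_def by blast
  obtain j1 kn where j: "j = prod_encode (j1, kn)" by (metis prod_decode_inverse prod.collapse)
  have "(if \<exists>i b ks. parse N (wdec j1) = SD i b ks \<and> Qof qa p i b (list_encode (ks @ [kn])) = even (Suc N) then Suc j1 else 0) = Suc (wcode w)"
    using r j Uen0 by simp
  from if_Suc_eq[OF this] have c: "\<exists>i b ks. parse N (wdec j1) = SD i b ks \<and> Qof qa p i b (list_encode (ks @ [kn])) = even (Suc N)"
    and e: "j1 = wcode w" by blast+
  from c obtain i b ks where c1: "parse N (wdec j1) = SD i b ks" and c2: "Qof qa p i b (list_encode (ks @ [kn])) = even (Suc N)"
    by blast
  have "stx N x (length w) = SD i b ks" using e pw c1 by (simp add: stx_def)
  thus "x \<in> qgame.Mset N (Qof qa p)" using c2 unfolding qgame.Mset_def by blast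
next
  fix x assume "x \<in> qgame.Mset N (Qof qa p)"
  then obtain m i b ks kn where s: "stx N x m = SD i b ks" and q: "Qof qa p i b (list_encode (ks @ [kn])) = even (Suc N)"
    unfolding qgame.Mset_def by blast
  let ?w = "prefix_of x m"
  have "parse N (wdec (wcode ?w)) = SD i b ks" using s by (simp add: stx_def)
  hence "Uen N qa p (prod_encode (0, prod_encode (wcode ?w, kn))) = Suc (wcode ?w)"
    using q Uen0 by auto
  moreover have "prefix_of x (length ?w) = ?w" by simp
  ultimately show "x \<in> open_of (\<lambda>j. Uen N qa p (prod_encode (0, j)))"
    unfolding open_of_def by blast
qed

lemma open_V: assumes "0 < \<beta>" "\<beta> < Suc N"
  shows "open_of (\<lambda>j. Uen N qa p (prod_encode (\<beta>, j))) = qgame.Vset N (Suc N - \<beta>)"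
proof (intro set_eqI iffI)
  fix x assume "x \<in> open_of (\<lambda>j. Uen N qa p (prod_encode (\<beta>, j)))"
  then obtain j w where r: "Uen N qa p (prod_encode (\<beta>, j)) = Suc (wcode w)" and pw: "prefix_of x (length w) = w"
    unfolding open_of_def by blast
  have "(if Suc N - \<beta> \<le> blocks (parse N (wdec j)) then Suc j else 0) = Suc (wcode w)"
    using r UenV[OF assms] by simp
  from if_Suc_eq[OF this] have c: "Suc N - \<beta> \<le> blocks (parse N (wdec j))" and e: "j = wcode w" by blast+
  have "stx N x (length w) = parse N (wdec j)" using e pw by (simp add: stx_def)
  thus "x \<in> qgame.Vset N (Suc N - \<beta>)" using c unfolding qgame.Vset_def by (metis (mono_tags, lifting) mem_Collect_eq)
next
  fix x assume "x \<in> qgame.Vset N (Suc N - \<beta>)"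
  then obtain m where s: "Suc N - \<beta> \<le> blocks (stx N x m)" unfolding qgame.Vset_def by blast
  let ?w = "prefix_of x m"
  have "Uen N qa p (prod_encode (\<beta>, wcode ?w)) = Suc (wcode ?w)"
    using s UenV[OF assms] by (simp add: stx_def)
  moreover have "prefix_of x (length ?w) = ?w" by simp
  ultimately show "x \<in> open_of (\<lambda>j. Uen N qa p (prod_encode (\<beta>, j)))"
    unfolding open_of_def by blast
qed

lemma open_U: "open_of (\<lambda>j. Uen N qa p (prod_encode (\<beta>, j))) = qgame.UU N (Qof qa p) \<beta>"
proof -
  consider "\<beta> = 0" | "0 < \<beta> \<and> \<beta> < Suc N" | "Suc N \<le> \<beta>" by linarith
  then show ?thesis
  proof cases
    case 1 then show ?thesis using open_M by (simp add: qgame.UU_def)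
  next
    case 2 then show ?thesis using open_V by (simp add: qgame.UU_def)
  next
    case 3 then show ?thesis by (simp add: qgame.UU_def UenE open_of_def)
  qed
qed

lemma game_name: "rep_game (Suc N) (HF N qa p) = Some (qgame.game N (Qof qa p))"
proof -
  have t: "HF N qa p (2 * wcode w) = tval (encst (parse N w))" for w
    by (simp add: HF_def aparse_correct)
  have u: "HF N qa p (2 * i + 1) = Uen N qa p i" for i by (simp add: HF_def)
  have rt: "rep_turn (\<lambda>i. HF N qa p (2 * i)) = Some (turn N)"
    unfolding rep_turn_def t tval_enc turn_def
    by (auto intro!: ext) (metis player.exhaust)
  have rd: "rep_D (Suc N) (\<lambda>i. HF N qa p (2 * i + 1)) = Some (qgame.Dw N (Qof qa p))"
    unfolding rep_D_def u open_U qgame.Dw_def by simp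
  show ?thesis unfolding rep_game_def rt rd qgame.game_def by simp
qed


lemma computable_RF: "RF f \<Longrightarrow> computable (\<lambda>p. Some (f p))"
  unfolding computable_def RF_def by auto

definition qaL :: "baire \<Rightarrow> nat \<Rightarrow> nat" where
  "qaL p z = p (prod_encode (fst (prod_decode z),
      snd (prod_decode (snd (prod_decode z))) + snd (prod_decode (snd (prod_decode z))) + fst (prod_decode (snd (prod_decode z)))))"

definition qaE :: "baire \<Rightarrow> nat \<Rightarrow> nat" where
  "qaE p z = p (snd (prod_decode (snd (prod_decode z))))"

lemma RF_qaL: "RF qaL"
proof -
  have "RF (\<lambda>p z. qaL p z)" unfolding qaL_def by (intro RF_orc RF_pe' RF_add RF_fst RF_snd RF_var)
  thus ?thesis by simp
qed

lemma RF_qaE: "RF qaE"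
proof -
  have "RF (\<lambda>p z. qaE p z)" unfolding qaE_def by (intro RF_orc RF_fst RF_snd RF_var)
  thus ?thesis by simp
qed

definition cw :: "nat \<Rightarrow> nat" where "cw i = ((\<lambda>y. Suc (y + y)) ^^ i) 2"

lemma cw_correct: "cw i = wcode (replicate i False @ [True])"
  by (induction i) (auto simp: cw_def)

lemma RF_cw: "RF a \<Longrightarrow> RF (\<lambda>p x. cw (a p x))"
proof -
  assume a: "RF a"
  have s: "RF (\<lambda>p y. Suc (y + y))" by (intro RF_Suc RF_add RF_var)
  show ?thesis unfolding cw_def by (intro RF_iter[OF s] RF_cnst a)
qed

definition KLf :: "baire \<Rightarrow> nat \<Rightarrow> nat" where
  "KLf p x = p (Suc (cw (fst (prod_decode x)) + cw (fst (prod_decode x))))"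

definition KEf :: "baire \<Rightarrow> nat \<Rightarrow> nat" where
  "KEf p x = (if p 1 = 2 then 1 else 0)"

lemma RF_KLf: "RF KLf"
proof -
  have "RF (\<lambda>p x. KLf p x)" unfolding KLf_def by (intro RF_orc RF_Suc RF_add RF_cw RF_fst RF_var)
  thus ?thesis by simp
qed

lemma RF_KEf: "RF KEf"
proof -
  have "RF (\<lambda>p x. KEf p x)" unfolding KEf_def by (intro RF_if RFP_eq RF_orc RF_cnst)
  thus ?thesis by simp
qed

lemma rep_seq_pairs:
  assumes "rep_seq (rep_prod rep_cantor rep_cantor) p = Some xs"
  shows "xs i = ((\<lambda>m. p (prod_encode (i, 2 * m)) = 1), (\<lambda>m. p (prod_encode (i, 2 * m + 1)) = 1))"
proof -
  have all: "\<forall>i. rep_prod rep_cantor rep_cantor (\<lambda>j. p (prod_encode (i, j))) \<noteq> None"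
    and xs: "xs = (\<lambda>i. the (rep_prod rep_cantor rep_cantor (\<lambda>j. p (prod_encode (i, j)))))"
    using assms unfolding rep_seq_def by (auto split: if_splits)
  have "rep_prod rep_cantor rep_cantor (\<lambda>j. p (prod_encode (i, j))) \<noteq> None" using all by blast
  thus ?thesis unfolding xs rep_prod_def rep_cantor_def by (auto split: if_splits)
qed

lemma Qof_qaL:
  assumes "rep_seq (rep_prod rep_cantor rep_cantor) p = Some xs"
  shows "Qof qaL p i b = (if b then snd (xs i) else fst (xs i))"
  using rep_seq_pairs[OF assms, of i]
  by (auto simp: Qof_def qaL_def bn_def intro!: ext simp flip: mult_2)

lemma Qof_qaE:
  assumes "rep_cantor p = Some x"
  shows "Qof qaE p i b = x"
  using assms by (auto simp: Qof_def qaE_def rep_cantor_def split: if_splits intro!: ext)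

lemma part1:
  "weihrauch_le (rep_seq (rep_prod rep_cantor rep_cantor)) (rep_seq rep_bool)
            (hat (sigma_LLPO (Suc N))) (rep_game (Suc N)) rep_profile Det"
  unfolding weihrauch_le_def
proof (intro exI conjI allI impI)
  show "computable (\<lambda>p. Some (KLf p))" by (rule computable_RF[OF RF_KLf])
  show "computable (\<lambda>p. Some (HF N qaL p))" by (rule computable_RF[OF RF_HF[OF RF_qaL]])
  fix G assume RG: "realizer (rep_game (Suc N)) rep_profile Det G"
  show "realizer (rep_seq (rep_prod rep_cantor rep_cantor)) (rep_seq rep_bool) (hat (sigma_LLPO (Suc N)))
      (\<lambda>p. Option.bind (Some (HF N qaL p)) (\<lambda>h. Option.bind (G h) (\<lambda>q. Some (KLf (baire_pair p q)))))"
    unfolding realizer_def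
  proof (intro allI impI)
    fix p xs
    assume px: "rep_seq (rep_prod rep_cantor rep_cantor) p = Some xs" and ne: "hat (sigma_LLPO (Suc N)) xs \<noteq> {}"
    define Q where "Q = Qof qaL p"
    have QQ: "Q i b = (if b then snd (xs i) else fst (xs i))" for i b unfolding Q_def by (rule Qof_qaL[OF px])
    have dom: "\<forall>i. \<exists>b. phi (Suc N) (Q i b)"
    proof
      fix i
      obtain ys where "ys \<in> hat (sigma_LLPO (Suc N)) xs" using ne by blast
      hence "ys i \<in> sigma_LLPO (Suc N) (xs i)" unfolding hat_def by blast
      hence "phi (Suc N) (Q i (ys i))" unfolding sigma_LLPO_def QQ by simp
      thus "\<exists>b. phi (Suc N) (Q i b)" by blast
    qed
    have gn: "rep_game (Suc N) (HF N qaL p) = Some (qgame.game N Q)" unfolding Q_def by (rule game_name)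
    have "qgame.dfd N Q \<in> Det (qgame.game N Q)"
      using qgame.dfd_winning[OF dom] unfolding Det_def by blast
    hence "Det (qgame.game N Q) \<noteq> {}" by blast
    then obtain q \<sigma> where Gq: "G (HF N qaL p) = Some q" and rq: "rep_profile q = Some \<sigma>"
      and sd: "\<sigma> \<in> Det (qgame.game N Q)"
      using RG gn unfolding realizer_def by blast
    have qle: "\<forall>w. q (wcode w) \<le> 1" and sg: "\<sigma> = (\<lambda>w. q (wcode w) = 1)"
      using rq unfolding rep_profile_def by (auto split: if_splits)
    define out where "out = KLf (baire_pair p q)"
    have out: "out (prod_encode (i, j)) = q (cw i)" for i j
      unfolding out_def KLf_def baire_pair_def by simp
    define y where "y = (\<lambda>i. \<sigma> (replicate i False @ [True]))"
    have ry: "rep_seq rep_bool out = Some y"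
      unfolding rep_seq_def rep_bool_def out y_def sg cw_correct using qle by auto
    have "y \<in> hat (sigma_LLPO (Suc N)) xs"
      unfolding hat_def sigma_LLPO_def y_def
      using qgame.extract_lem[OF dom sd] QQ by simp
    thus "\<exists>q y. Option.bind (Some (HF N qaL p)) (\<lambda>h. Option.bind (G h) (\<lambda>q. Some (KLf (baire_pair p q)))) = Some q \<and>
              rep_seq rep_bool q = Some y \<and> y \<in> hat (sigma_LLPO (Suc N)) xs"
      using Gq ry out_def by auto
  qed
qed

lemma part2:
  "weihrauch_le rep_cantor rep_bool (sigma_LEM (Suc N)) (rep_game (Suc N)) rep_player Win"
  unfolding weihrauch_le_def
proof (intro exI conjI allI impI)
  show "computable (\<lambda>p. Some (KEf p))" by (rule computable_RF[OF RF_KEf])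
  show "computable (\<lambda>p. Some (HF N qaE p))" by (rule computable_RF[OF RF_HF[OF RF_qaE]])
  fix G assume RG: "realizer (rep_game (Suc N)) rep_player Win G"
  show "realizer rep_cantor rep_bool (sigma_LEM (Suc N))
      (\<lambda>p. Option.bind (Some (HF N qaE p)) (\<lambda>h. Option.bind (G h) (\<lambda>q. Some (KEf (baire_pair p q)))))"
    unfolding realizer_def
  proof (intro allI impI)
    fix p x
    assume px: "rep_cantor p = Some x"
    define Q where "Q = Qof qaE p"
    have QQ: "Q i b = x" for i b unfolding Q_def by (rule Qof_qaE[OF px])
    have gn: "rep_game (Suc N) (HF N qaE p) = Some (qgame.game N Q)" unfolding Q_def by (rule game_name)
    have W: "Win (qgame.game N Q) = (if phi (Suc N) x then {P2} else {P1})"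
    proof (cases "phi (Suc N) x")
      case True
      then show ?thesis using qgame.Win_P2[of N Q] QQ by simp
    next
      case False
      then show ?thesis using qgame.Win_P1[of N Q 0] QQ by simp
    qed
    then obtain q pl where Gq: "G (HF N qaE p) = Some q" and rq: "rep_player q = Some pl"
      and pw: "pl \<in> Win (qgame.game N Q)"
      using RG gn unfolding realizer_def by (metis empty_not_insert)
    have "rep_bool (KEf (baire_pair p q)) = Some (phi (Suc N) x)"
      using rq pw W unfolding rep_bool_def KEf_def baire_pair_def rep_player_def
      by (auto split: if_splits)
    thus "\<exists>q y. Option.bind (Some (HF N qaE p)) (\<lambda>h. Option.bind (G h) (\<lambda>q. Some (KEf (baire_pair p q)))) = Some q \<and>
              rep_bool q = Some y \<and> y \<in> sigma_LEM (Suc N) x"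
      using Gq by (auto simp: sigma_LEM_def)
  qed
qed

theorem lemma14:
  fixes n :: nat
  assumes "n \<ge> 1"
  shows "weihrauch_le (rep_seq (rep_prod rep_cantor rep_cantor)) (rep_seq rep_bool)
            (hat (sigma_LLPO n)) (rep_game n) rep_profile Det
       \<and> weihrauch_le rep_cantor rep_bool (sigma_LEM n) (rep_game n) rep_player Win"
proof -
  obtain N where n: "n = Suc N" using assms by (cases n) auto
  show ?thesis unfolding n using part1 part2 by blast
qed


end
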